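(* Let $a<b<c$ be elements of $\mathcal{C}_n$ and let $\triangle=\triangle^{(n)}\{a,b,c\}$. Let $L_{par}=\{\alpha\in\triangle:\ \alpha(a)=a,\ \alpha(b)=\alpha(c)=b\}$ and $R_{par}=\{\alpha\in\triangle:\ \alpha(a)=\alpha(b)=b,\ \alpha(c)=c\}$. Then $L_{par}$ and $R_{par}$ are subsemirings of $\triangle$.
   Context: $\mathcal{C}_n=\{0,1,\dots,n-1\}$ with its usual order; $\widehat{\mathcal{E}}_{\mathcal{C}_n}$ is the set of all order-preserving maps $\mathcal{C}_n\to\mathcal{C}_n$ (not required to fix $0$), a semiring with $(\alpha+\beta)(x)=\max(\alpha(x),\beta(x))$ and $(\alpha\cdot\beta)(x)=\beta(\alpha(x))$. The triangle $\triangle^{(n)}\{a,b,c\}$ is the set of all $\alpha\in\widehat{\mathcal{E}}_{\mathcal{C}_n}$ with image in $\{a,b,c\}$. In the paper, $L_{par}$ is the set of "left elements" of the layers $\{\alpha\in\triangle: |\alpha^{-1}(a)|=k\}$, $a+1\le k\le b$, and $R_{par}$ the set of "right elements" of the layers $\{\alpha\in\triangle: |\alpha^{-1}(c)|=k\}$, $n-c\le k\le n-b-1$; these coincide with the sets described in the claim. A subsemiring is a nonempty subset closed under $+$ and $\cdot$. *)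

theory Defs
  imports Main
begin

text \<open>The chain C_n = {0,...,n-1}. An order-preserving self-map of C_n is represented
  by a function nat => nat, canonically extended by 0 outside {0..<n}.\<close>

definition endo :: "nat \<Rightarrow> (nat \<Rightarrow> nat) set" where
  "endo n = {f. (\<forall>x<n. f x < n) \<and> (\<forall>x y. x \<le> y \<and> y < n \<longrightarrow> f x \<le> f y)
                \<and> (\<forall>x\<ge>n. f x = 0)}"

definition eplus :: "nat \<Rightarrow> (nat \<Rightarrow> nat) \<Rightarrow> (nat \<Rightarrow> nat) \<Rightarrow> (nat \<Rightarrow> nat)" where
  "eplus n f g = (\<lambda>x. if x < n then max (f x) (g x) else 0)"

definition etimes :: "nat \<Rightarrow> (nat \<Rightarrow> nat) \<Rightarrow> (nat \<Rightarrow> nat) \<Rightarrow> (nat \<Rightarrow> nat)" where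
  "etimes n f g = (\<lambda>x. if x < n then g (f x) else 0)"

definition triangle :: "nat \<Rightarrow> nat \<Rightarrow> nat \<Rightarrow> nat \<Rightarrow> (nat \<Rightarrow> nat) set" where
  "triangle n a b c = {f \<in> endo n. \<forall>x<n. f x \<in> {a, b, c}}"

definition subsemiring :: "nat \<Rightarrow> (nat \<Rightarrow> nat) set \<Rightarrow> (nat \<Rightarrow> nat) set \<Rightarrow> bool" where
  "subsemiring n S T \<longleftrightarrow> S \<subseteq> T \<and> S \<noteq> {}
     \<and> (\<forall>f\<in>S. \<forall>g\<in>S. eplus n f g \<in> S \<and> etimes n f g \<in> S)"

definition Lpar :: "nat \<Rightarrow> nat \<Rightarrow> nat \<Rightarrow> nat \<Rightarrow> (nat \<Rightarrow> nat) set" where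
  "Lpar n a b c = {f \<in> triangle n a b c. f a = a \<and> f b = b \<and> f c = b}"

definition Rpar :: "nat \<Rightarrow> nat \<Rightarrow> nat \<Rightarrow> nat \<Rightarrow> (nat \<Rightarrow> nat) set" where
  "Rpar n a b c = {f \<in> triangle n a b c. f a = b \<and> f b = b \<and> f c = c}"

end

theory Submission
  imports Defs
begin

lemma tri_plus:
  assumes "f \<in> triangle n a b c" "g \<in> triangle n a b c"
  shows "eplus n f g \<in> triangle n a b c"
proof -
  have F: "\<forall>x<n. f x < n" "\<forall>x y. x \<le> y \<and> y < n \<longrightarrow> f x \<le> f y" "\<forall>x<n. f x \<in> {a,b,c}"
   and G: "\<forall>x<n. g x < n" "\<forall>x y. x \<le> y \<and> y < n \<longrightarrow> g x \<le> g y" "\<forall>x<n. g x \<in> {a,b,c}"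
    using assms unfolding triangle_def endo_def by auto
  have m: "\<And>x y. x \<le> y \<Longrightarrow> y < n \<Longrightarrow> max (f x) (g x) \<le> max (f y) (g y)"
    using F(2) G(2) by (meson max.mono)
  have v: "\<And>x. x < n \<Longrightarrow> max (f x) (g x) \<in> {a,b,c}"
    using F(3) G(3) by (metis max_def)
  show ?thesis unfolding triangle_def endo_def eplus_def
    using F(1) G(1) m v by auto
qed

lemma tri_times:
  assumes "f \<in> triangle n a b c" "g \<in> triangle n a b c"
  shows "etimes n f g \<in> triangle n a b c"
  using assms unfolding triangle_def endo_def etimes_def
  by auto

lemma tri_mem: "f \<in> triangle n a b c \<Longrightarrow> x < n \<Longrightarrow> f x < n"
  unfolding triangle_def endo_def by auto

lemma L_closed:
  assumes "a < b" "b < c" "c < n" "f \<in> Lpar n a b c" "g \<in> Lpar n a b c"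
  shows "eplus n f g \<in> Lpar n a b c \<and> etimes n f g \<in> Lpar n a b c"
proof -
  have ft: "f \<in> triangle n a b c" and gt: "g \<in> triangle n a b c"
   and fv: "f a = a" "f b = b" "f c = b" and gv: "g a = a" "g b = b" "g c = b"
    using assms(4,5) unfolding Lpar_def by auto
  have "eplus n f g a = a" "eplus n f g b = b" "eplus n f g c = b"
    using assms(1-3) fv gv unfolding eplus_def by auto
  moreover have "etimes n f g a = a" "etimes n f g b = b" "etimes n f g c = b"
    using assms(1-3) fv gv unfolding etimes_def by auto
  ultimately show ?thesis using tri_plus[OF ft gt] tri_times[OF ft gt] unfolding Lpar_def by blast
qed

lemma R_closed:
  assumes "a < b" "b < c" "c < n" "f \<in> Rpar n a b c" "g \<in> Rpar n a b c"
  shows "eplus n f g \<in> Rpar n a b c \<and> etimes n f g \<in> Rpar n a b c"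
proof -
  have ft: "f \<in> triangle n a b c" and gt: "g \<in> triangle n a b c"
   and fv: "f a = b" "f b = b" "f c = c" and gv: "g a = b" "g b = b" "g c = c"
    using assms(4,5) unfolding Rpar_def by auto
  have "eplus n f g a = b" "eplus n f g b = b" "eplus n f g c = c"
    using assms(1-3) fv gv unfolding eplus_def by auto
  moreover have "etimes n f g a = b" "etimes n f g b = b" "etimes n f g c = c"
    using assms(1-3) fv gv unfolding etimes_def by auto
  ultimately show ?thesis using tri_plus[OF ft gt] tri_times[OF ft gt] unfolding Rpar_def by blast
qed

theorem proposition39:
  fixes n a b c :: nat
  assumes "a < b" and "b < c" and "c < n"
  shows "subsemiring n (Lpar n a b c) (triangle n a b c)
       \<and> subsemiring n (Rpar n a b c) (triangle n a b c)"
proof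
  define f where "f = (\<lambda>x. if x < n then (if x \<le> a then a else b) else (0::nat))"
  have "f \<in> Lpar n a b c" using assms
    unfolding f_def Lpar_def triangle_def endo_def by auto
  moreover have "\<forall>f\<in>Lpar n a b c. \<forall>g\<in>Lpar n a b c. eplus n f g \<in> Lpar n a b c \<and> etimes n f g \<in> Lpar n a b c"
    using L_closed[OF assms] by blast
  ultimately show "subsemiring n (Lpar n a b c) (triangle n a b c)"
    unfolding subsemiring_def Lpar_def by blast
next
  define f where "f = (\<lambda>x. if x < n then (if x < c then b else c) else (0::nat))"
  have "f \<in> Rpar n a b c" using assms
    unfolding f_def Rpar_def triangle_def endo_def by auto
  moreover have "\<forall>f\<in>Rpar n a b c. \<forall>g\<in>Rpar n a b c. eplus n f g \<in> Rpar n a b c \<and> etimes n f g \<in> Rpar n a b c"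
    using R_closed[OF assms] by blast
  ultimately show "subsemiring n (Rpar n a b c) (triangle n a b c)"
    unfolding subsemiring_def Rpar_def by blast
qed

end
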